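(* Let $3 \leq s \leq t$ be integers. Let $G$ be a graph and $V(G) = A \cup B$ a partition of its vertex set. If $G[A]$ is $K_{2,2}$-free, $G[B]$ is $K_{2,2}$-free, and $G(A,B)$ is $K_{s,t}$-free, then $G$ is $K_{s+1,t+1}$-free.
   Context: $G[A]$ is the subgraph induced by $A$; $G(A,B)$ is the spanning subgraph of $G$ whose edges are those of $G$ with one endpoint in $A$ and the other in $B$. A graph is $F$-free if it has no subgraph isomorphic to $F$. *)

theory Defs
  imports Main
begin

definition simple_graph :: "'a set \<Rightarrow> ('a \<Rightarrow> 'a \<Rightarrow> bool) \<Rightarrow> bool" where
  "simple_graph V E \<longleftrightarrow> finite V \<and> (\<forall>x y. E x y \<longrightarrow> E y x) \<and>
     (\<forall>x. \<not> E x x) \<and> (\<forall>x y. E x y \<longrightarrow> x \<in> V \<and> y \<in> V)"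

definition has_Kst :: "'a set \<Rightarrow> ('a \<Rightarrow> 'a \<Rightarrow> bool) \<Rightarrow> nat \<Rightarrow> nat \<Rightarrow> bool" where
  "has_Kst V E s t \<longleftrightarrow> (\<exists>S T. S \<subseteq> V \<and> T \<subseteq> V \<and> S \<inter> T = {} \<and>
     finite S \<and> finite T \<and> card S = s \<and> card T = t \<and> (\<forall>x\<in>S. \<forall>y\<in>T. E x y))"

definition Kst_free :: "'a set \<Rightarrow> ('a \<Rightarrow> 'a \<Rightarrow> bool) \<Rightarrow> nat \<Rightarrow> nat \<Rightarrow> bool" where
  "Kst_free V E s t \<longleftrightarrow> \<not> has_Kst V E s t"

definition induced_edges :: "('a \<Rightarrow> 'a \<Rightarrow> bool) \<Rightarrow> 'a set \<Rightarrow> 'a \<Rightarrow> 'a \<Rightarrow> bool" where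
  "induced_edges E A = (\<lambda>x y. E x y \<and> x \<in> A \<and> y \<in> A)"

text \<open>Edges of G(A,B): those with one endpoint in A and the other in B
  (spanning subgraph, vertex set V(G)).\<close>
definition cross_edges :: "('a \<Rightarrow> 'a \<Rightarrow> bool) \<Rightarrow> 'a set \<Rightarrow> 'a set \<Rightarrow> 'a \<Rightarrow> 'a \<Rightarrow> bool" where
  "cross_edges E A B = (\<lambda>x y. E x y \<and> ((x \<in> A \<and> y \<in> B) \<or> (x \<in> B \<and> y \<in> A)))"

end

theory Submission
  imports Defs
begin

lemma shrink:
  assumes "finite S" "card S = Suc n" "card (S \<inter> A) \<le> 1" "S \<subseteq> A \<union> B"
  shows "\<exists>S'. S' \<subseteq> S \<inter> B \<and> finite S' \<and> card S' = n"
proof -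
  have "S = (S \<inter> A) \<union> (S \<inter> B)" using assms(4) by blast
  hence "card S \<le> card (S \<inter> A) + card (S \<inter> B)" by (metis card_Un_le)
  hence "n \<le> card (S \<inter> B)" using assms by simp
  then obtain S' where "S' \<subseteq> S \<inter> B" "card S' = n"
    by (meson obtain_subset_with_card_n)
  moreover have "finite S'" using \<open>S' \<subseteq> S \<inter> B\<close> assms(1) finite_subset by blast
  ultimately show ?thesis by blast
qed

lemma two_side:
  assumes free: "Kst_free A (induced_edges E A) 2 2"
    and S: "finite S" "S \<subseteq> V" and T: "finite T" "T \<subseteq> V" and d: "S \<inter> T = {}"
    and c: "\<forall>x\<in>S. \<forall>y\<in>T. E x y"
  shows "card (S \<inter> A) \<le> 1 \<or> card (T \<inter> A) \<le> 1"
proof (rule ccontr)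
  assume "\<not> ?thesis"
  hence "2 \<le> card (S \<inter> A)" "2 \<le> card (T \<inter> A)" by auto
  then obtain X Y where X: "X \<subseteq> S \<inter> A" "card X = 2" and Y: "Y \<subseteq> T \<inter> A" "card Y = 2"
    by (meson obtain_subset_with_card_n)
  have "has_Kst A (induced_edges E A) 2 2"
    unfolding has_Kst_def induced_edges_def
    apply (rule exI[of _ X], rule exI[of _ Y])
    using X Y d c S T by (auto intro: finite_subset) (meson subsetD)
  thus False using free unfolding Kst_free_def by blast
qed

theorem lemma4p4:
  fixes V :: "'a set" and E :: "'a \<Rightarrow> 'a \<Rightarrow> bool" and A B :: "'a set"
    and s t :: nat
  assumes "3 \<le> s" and "s \<le> t"
    and "simple_graph V E"
    and "A \<union> B = V" and "A \<inter> B = {}"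
    and "Kst_free A (induced_edges E A) 2 2"
    and "Kst_free B (induced_edges E B) 2 2"
    and "Kst_free V (cross_edges E A B) s t"
  shows "Kst_free V E (s + 1) (t + 1)"
proof -
  { assume "has_Kst V E (s + 1) (t + 1)"
    then obtain S T where ST: "S \<subseteq> V" "T \<subseteq> V" "S \<inter> T = {}" "finite S" "finite T"
      "card S = Suc s" "card T = Suc t" and c: "\<forall>x\<in>S. \<forall>y\<in>T. E x y"
      unfolding has_Kst_def by auto
    have hA: "card (S \<inter> A) \<le> 1 \<or> card (T \<inter> A) \<le> 1"
      using two_side[OF assms(6) ST(4,1) ST(5,2) ST(3) c] .
    have hB: "card (S \<inter> B) \<le> 1 \<or> card (T \<inter> B) \<le> 1"
      using two_side[OF assms(7) ST(4,1) ST(5,2) ST(3) c] .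
    have SV: "S \<subseteq> A \<union> B" "S \<subseteq> B \<union> A" "T \<subseteq> A \<union> B" "T \<subseteq> B \<union> A" using ST assms(4) by auto
    have "\<not> (card (S \<inter> A) \<le> 1 \<and> card (S \<inter> B) \<le> 1)"
    proof
      assume h: "card (S \<inter> A) \<le> 1 \<and> card (S \<inter> B) \<le> 1"
      have "S = (S \<inter> A) \<union> (S \<inter> B)" using SV by blast
      hence "card S \<le> card (S \<inter> A) + card (S \<inter> B)" by (metis card_Un_le)
      thus False using h ST assms(1) by simp
    qed
    moreover have "\<not> (card (T \<inter> A) \<le> 1 \<and> card (T \<inter> B) \<le> 1)"
    proof
      assume h: "card (T \<inter> A) \<le> 1 \<and> card (T \<inter> B) \<le> 1"
      have "T = (T \<inter> A) \<union> (T \<inter> B)" using SV by blast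
      hence "card T \<le> card (T \<inter> A) + card (T \<inter> B)" by (metis card_Un_le)
      thus False using h ST assms(1,2) by simp
    qed
    ultimately have cases: "(card (S \<inter> A) \<le> 1 \<and> card (T \<inter> B) \<le> 1) \<or>
        (card (S \<inter> B) \<le> 1 \<and> card (T \<inter> A) \<le> 1)" using hA hB by blast
    have "has_Kst V (cross_edges E A B) s t"
    proof (rule disjE[OF cases])
      assume h: "card (S \<inter> A) \<le> 1 \<and> card (T \<inter> B) \<le> 1"
      obtain S' where S': "S' \<subseteq> S \<inter> B" "finite S'" "card S' = s"
        using shrink[OF ST(4) ST(6) _ SV(1)] h by blast
      obtain T' where T': "T' \<subseteq> T \<inter> A" "finite T'" "card T' = t"
        using shrink[OF ST(5) ST(7) _ SV(4)] h by blast
      show ?thesis unfolding has_Kst_def cross_edges_def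
        apply (rule exI[of _ S'], rule exI[of _ T'])
        using S' T' ST c by blast
    next
      assume h: "card (S \<inter> B) \<le> 1 \<and> card (T \<inter> A) \<le> 1"
      obtain S' where S': "S' \<subseteq> S \<inter> A" "finite S'" "card S' = s"
        using shrink[OF ST(4) ST(6) _ SV(2)] h by blast
      obtain T' where T': "T' \<subseteq> T \<inter> B" "finite T'" "card T' = t"
        using shrink[OF ST(5) ST(7) _ SV(3)] h by blast
      show ?thesis unfolding has_Kst_def cross_edges_def
        apply (rule exI[of _ S'], rule exI[of _ T'])
        using S' T' ST c by blast
    qed
    hence False using assms(8) unfolding Kst_free_def by blast }
  thus ?thesis unfolding Kst_free_def by blast
qed

end
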